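(* If $X$ is a locally compact Hausdorff space that is not pseudocompact, then $X$ contains a regular closed, $\sigma$-compact, non-pseudocompact subset.
   Context: A space is pseudocompact if every continuous real-valued function on it is bounded. A subset is regular closed if it equals the closure of its interior. *)

theory Defs
  imports "HOL-Analysis.Analysis"
begin

definition pseudocompact_space :: "'a topology \<Rightarrow> bool" where
  "pseudocompact_space X \<longleftrightarrow>
     (\<forall>f. continuous_map X euclideanreal f \<longrightarrow> (\<exists>B. \<forall>x\<in>topspace X. \<bar>f x\<bar> \<le> B))"

definition regular_closed_in :: "'a topology \<Rightarrow> 'a set \<Rightarrow> bool" where
  "regular_closed_in X A \<longleftrightarrow> X closure_of (X interior_of A) = A"

definition sigma_compact_in :: "'a topology \<Rightarrow> 'a set \<Rightarrow> bool" where
  "sigma_compact_in X A \<longleftrightarrow> (\<exists>K :: nat \<Rightarrow> 'a set. (\<forall>n. compactin X (K n)) \<and> A = (\<Union>n. K n))"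

end

theory Submission
  imports Defs
begin

theorem lemma3p3:
  fixes X :: "'a topology"
  assumes "locally_compact_space X" and "Hausdorff_space X"
    and "\<not> pseudocompact_space X"
  shows "\<exists>A. A \<subseteq> topspace X \<and> regular_closed_in X A \<and> sigma_compact_in X A
             \<and> \<not> pseudocompact_space (subtopology X A)"
proof -
  obtain f where fc: "continuous_map X euclideanreal f"
    and unb: "\<And>B. \<exists>x\<in>topspace X. \<bar>f x\<bar> > B"
  proof -
    from assms(3) obtain f where "continuous_map X euclideanreal f"
      and "\<not> (\<exists>B. \<forall>x\<in>topspace X. \<bar>f x\<bar> \<le> B)"
      unfolding pseudocompact_space_def by blast
    then show ?thesis using that by (simp add: not_le)
  qed
  have "\<forall>n::nat. \<exists>x\<in>topspace X. \<bar>f x\<bar> > 3 * real n" using unb by blast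
  then obtain x where xX: "\<And>n. x n \<in> topspace X" and xb: "\<And>n. \<bar>f (x n)\<bar> > 3 * real n"
    by (metis (no_types))
  have "\<forall>n. \<exists>U K. openin X U \<and> compactin X K \<and> x n \<in> U \<and> U \<subseteq> K"
    using assms(1) xX unfolding locally_compact_space_def by blast
  then obtain U K where U: "\<And>n. openin X (U n)" and K: "\<And>n. compactin X (K n)"
    and xU: "\<And>n. x n \<in> U n" and UK: "\<And>n. U n \<subseteq> K n"
    by (metis (no_types))
  define V where "V n = {y \<in> topspace X. f y \<in> {f (x n) - 1/2 <..< f (x n) + 1/2}}" for n
  define W where "W n = U n \<inter> V n" for n
  define C where "C n = X closure_of W n" for n
  define A where "A = (\<Union>n. C n)"
  have Vo: "openin X (V n)" for n
    unfolding V_def by (rule openin_continuous_map_preimage[OF fc]) auto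
  have Wo: "openin X (W n)" for n unfolding W_def using U Vo by blast
  have xW: "x n \<in> W n" for n unfolding W_def V_def using xU xX by auto
  have CK: "compactin X (C n)" for n
  proof -
    have "C n \<subseteq> K n" unfolding C_def
      by (rule closure_of_minimal) (use UK compactin_imp_closedin[OF assms(2) K] W_def in auto)
    then show ?thesis using closed_compactin[OF K] C_def by auto
  qed
  have lf: "locally_finite_in X (range W)"
    unfolding locally_finite_in_def
  proof (intro conjI ballI)
    show "\<Union> (range W) \<subseteq> topspace X" using Wo openin_subset by blast
    fix y assume yX: "y \<in> topspace X"
    define N where "N = {y \<in> topspace X. f y \<in> {f y - 1 <..< f y + 1}}"
    let ?t = "f y"
    define T where "T = {z \<in> topspace X. f z \<in> {?t - 1 <..< ?t + 1}}"
    have To: "openin X T" unfolding T_def by (rule openin_continuous_map_preimage[OF fc]) auto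
    have yT: "y \<in> T" using yX T_def by auto
    have "{S \<in> range W. S \<inter> T \<noteq> {}} \<subseteq> W ` {n. 3 * real n \<le> \<bar>?t\<bar> + 2}"
    proof
      fix S assume "S \<in> {S \<in> range W. S \<inter> T \<noteq> {}}"
      then obtain n z where S: "S = W n" and z: "z \<in> W n" "z \<in> T" by auto
      have "f (x n) - 1/2 < f z \<and> f z < f (x n) + 1/2" using z(1) unfolding W_def V_def by auto
      moreover have "?t - 1 < f z \<and> f z < ?t + 1" using z(2) unfolding T_def by auto
      ultimately have "\<bar>f (x n)\<bar> \<le> \<bar>?t\<bar> + 2" by (simp add: abs_le_iff abs_if)
      then have "3 * real n \<le> \<bar>?t\<bar> + 2" using xb[of n] by linarith
      then show "S \<in> W ` {n. 3 * real n \<le> \<bar>?t\<bar> + 2}" using S by auto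
    qed
    moreover have "finite {n. 3 * real n \<le> \<bar>?t\<bar> + 2}"
    proof (rule finite_subset)
      show "{n. 3 * real n \<le> \<bar>?t\<bar> + 2} \<subseteq> {..nat \<lceil>\<bar>?t\<bar> + 2\<rceil>}"
      proof
        fix n assume "n \<in> {n. 3 * real n \<le> \<bar>?t\<bar> + 2}"
        then have "real n \<le> \<bar>?t\<bar> + 2" by auto
        then have "real n \<le> real (nat \<lceil>\<bar>?t\<bar> + 2\<rceil>)" by linarith
        then show "n \<in> {..nat \<lceil>\<bar>?t\<bar> + 2\<rceil>}" by simp
      qed
    qed auto
    ultimately have "finite {S \<in> range W. S \<inter> T \<noteq> {}}" by (meson finite_imageI finite_subset)
    then show "\<exists>V. openin X V \<and> y \<in> V \<and> finite {S \<in> range W. S \<inter> V \<noteq> {}}"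
      using To yT by blast
  qed
  have Acl: "closedin X A"
  proof -
    have "A = \<Union>((\<lambda>S. X closure_of S) ` range W)" unfolding A_def C_def by auto
    then show ?thesis using closedin_Union_locally_finite_closure[OF lf] by simp
  qed
  have AX: "A \<subseteq> topspace X" using closedin_subset[OF Acl] .
  have reg: "regular_closed_in X A"
    unfolding regular_closed_in_def
  proof
    show "X closure_of (X interior_of A) \<subseteq> A"
      by (rule closure_of_minimal[OF _ Acl]) (rule interior_of_subset)
    show "A \<subseteq> X closure_of (X interior_of A)"
    proof -
      have "W n \<subseteq> X interior_of A" for n
      proof (rule interior_of_maximal[OF _ Wo])
        have "W n \<subseteq> C n" unfolding C_def by (rule closure_of_subset[OF openin_subset[OF Wo]])
        then show "W n \<subseteq> A" unfolding A_def by blast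
      qed
      then have "C n \<subseteq> X closure_of (X interior_of A)" for n
        unfolding C_def by (rule closure_of_mono)
      then show ?thesis unfolding A_def by blast
    qed
  qed
  have sig: "sigma_compact_in X A" unfolding sigma_compact_in_def A_def using CK by blast
  have npc: "\<not> pseudocompact_space (subtopology X A)"
    unfolding pseudocompact_space_def
  proof
    assume H: "\<forall>g. continuous_map (subtopology X A) euclideanreal g \<longrightarrow>
                 (\<exists>B. \<forall>y\<in>topspace (subtopology X A). \<bar>g y\<bar> \<le> B)"
    have "continuous_map (subtopology X A) euclideanreal f"
      using fc continuous_map_from_subtopology by blast
    with H obtain B where B: "\<forall>y\<in>topspace (subtopology X A). \<bar>f y\<bar> \<le> B" by blast
    obtain n :: nat where n: "real n > B" using reals_Archimedean2 by blast
    have "W n \<subseteq> C n" unfolding C_def by (rule closure_of_subset[OF openin_subset[OF Wo]])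
    then have "x n \<in> A" unfolding A_def using xW by blast
    then have "x n \<in> topspace (subtopology X A)" using AX by auto
    with B have "\<bar>f (x n)\<bar> \<le> B" by blast
    with xb[of n] n show False by linarith
  qed
  show ?thesis using AX reg sig npc by blast
qed

end
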